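(* Let the joint distribution of observable random variables $(Y,D)$ on $\mathbb R\times\{0,1\}$ be given, and let $\nu$ be a probability distribution on $\mathbb R^2$. For a Borel set $A\subseteq\mathbb R^2$ define $U_{A,1}=\{y\in\mathbb R: ((-\infty,y]\times\{y\})\cap A\neq\varnothing\}$, $U_{A,0}=\{y\in\mathbb R:(\{y\}\times(-\infty,y])\cap A\neq\varnothing\}$, $L_{A,1}=\{y\in\mathbb R:(-\infty,y]\times\{y\}\subseteq A\}$, $L_{A,0}=\{y\in\mathbb R:\{y\}\times(-\infty,y]\subseteq A\}$. Then $\nu$ satisfies, for every Borel $A\subseteq\mathbb R^2$, $$\mathbb P(Y\in L_{A,0},D=0)+\mathbb P(Y\in L_{A,1},D=1)\le \nu(A)\le \mathbb P(Y\in U_{A,0},D=0)+\mathbb P(Y\in U_{A,1},D=1)$$ if and only if there exist, on some probability space, random variables $(\tilde Y,\tilde D,Y_0,Y_1)$ with $(\tilde Y,\tilde D)$ distributed as $(Y,D)$ and $(Y_0,Y_1)$ distributed as $\nu$ such that $\tilde Y=Y_1\tilde D+Y_0(1-\tilde D)$ and almost surely $Y_1>Y_0\Rightarrow \tilde D=1$ and $Y_1<Y_0\Rightarrow \tilde D=0$.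
   Context: Roy model: $Y$ is a real observed outcome, $D\in\{0,1\}$ an observed sector indicator, $(Y_0,Y_1)$ real potential outcomes (ordered as $(Y_0,Y_1)$ in $\mathbb R^2$), with $Y=Y_1D+Y_0(1-D)$ and the selection rule $Y_1>Y_0\Rightarrow D=1$, $Y_1<Y_0\Rightarrow D=0$ (unspecified when $Y_1=Y_0$). *)

theory Defs
  imports "HOL-Probability.Probability"
begin

text \<open>Potential outcomes are ordered as (Y0, Y1) in R^2.\<close>

definition U1 :: "(real \<times> real) set \<Rightarrow> real set" where
  "U1 A = {y. \<exists>x. x \<le> y \<and> (x, y) \<in> A}"

definition U0 :: "(real \<times> real) set \<Rightarrow> real set" where
  "U0 A = {y. \<exists>x. x \<le> y \<and> (y, x) \<in> A}"

definition L1 :: "(real \<times> real) set \<Rightarrow> real set" where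
  "L1 A = {y. \<forall>x. x \<le> y \<longrightarrow> (x, y) \<in> A}"

definition L0 :: "(real \<times> real) set \<Rightarrow> real set" where
  "L0 A = {y. \<forall>x. x \<le> y \<longrightarrow> (y, x) \<in> A}"

text \<open>Observable law P of (Y,D) on R x {0,1} (D encoded as bool, True = 1).
  Probabilities of the (possibly only analytic / co-analytic, hence universally
  measurable) sets U and L are taken w.r.t. the completion of P.\<close>

definition sharp_bounds :: "(real \<times> bool) measure \<Rightarrow> (real \<times> real) measure \<Rightarrow> bool" where
  "sharp_bounds P \<nu> \<longleftrightarrow>
    (\<forall>A \<in> sets (borel :: (real \<times> real) measure).
       measure (completion P) (L0 A \<times> {False}) + measure (completion P) (L1 A \<times> {True})
         \<le> measure \<nu> A
     \<and> measure \<nu> A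
         \<le> measure (completion P) (U0 A \<times> {False}) + measure (completion P) (U1 A \<times> {True}))"

definition roy_realization ::
  "'c measure \<Rightarrow> ('c \<Rightarrow> real) \<Rightarrow> ('c \<Rightarrow> bool) \<Rightarrow> ('c \<Rightarrow> real) \<Rightarrow> ('c \<Rightarrow> real)
   \<Rightarrow> (real \<times> bool) measure \<Rightarrow> (real \<times> real) measure \<Rightarrow> bool" where
  "roy_realization M Yt Dt Y0 Y1 P \<nu> \<longleftrightarrow>
     prob_space M \<and>
     Yt \<in> borel_measurable M \<and> Dt \<in> measurable M (count_space UNIV) \<and>
     Y0 \<in> borel_measurable M \<and> Y1 \<in> borel_measurable M \<and>
     distr M (borel \<Otimes>\<^sub>M count_space UNIV) (\<lambda>\<omega>. (Yt \<omega>, Dt \<omega>)) = P \<and>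
     distr M borel (\<lambda>\<omega>. (Y0 \<omega>, Y1 \<omega>)) = \<nu> \<and>
     (\<forall>\<omega> \<in> space M. Yt \<omega> = (if Dt \<omega> then Y1 \<omega> else Y0 \<omega>)) \<and>
     (AE \<omega> in M. (Y1 \<omega> > Y0 \<omega> \<longrightarrow> Dt \<omega>) \<and> (Y1 \<omega> < Y0 \<omega> \<longrightarrow> \<not> Dt \<omega>))"

end

theory Submission
  imports Defs
begin


definition sclosed :: "('a::topological_space \<times> (nat \<Rightarrow> real)) set \<Rightarrow> bool" where
  "sclosed C \<longleftrightarrow> (\<forall>s z s0 z0. (\<forall>k. (s k, z k) \<in> C) \<and> s \<longlonglongrightarrow> s0 \<and> (\<forall>i. (\<lambda>k. z k i) \<longlonglongrightarrow> z0 i)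
      \<longrightarrow> (s0, z0) \<in> C)"

definition good :: "'a::topological_space set \<Rightarrow> bool" where
  "good S \<longleftrightarrow> (\<exists>C. sclosed C \<and> S = {s. \<exists>z. (s, z) \<in> C})"

lemma sclosedD:
  assumes "sclosed C" "\<And>k. (s k, z k) \<in> C" "s \<longlonglongrightarrow> s0" "\<And>i. (\<lambda>k. z k i) \<longlonglongrightarrow> z0 i"
  shows "(s0, z0) \<in> C"
  using assms unfolding sclosed_def by blast

lemma good_closed:
  fixes S :: "'a::metric_space set"
  assumes "closed S" shows "good S"
proof -
  have "sclosed (S \<times> UNIV)"
    unfolding sclosed_def
  proof (intro allI impI)
    fix s z s0 z0 assume H: "(\<forall>k. (s k, z k) \<in> S \<times> (UNIV :: (nat \<Rightarrow> real) set)) \<and> s \<longlonglongrightarrow> s0 \<and> (\<forall>i. (\<lambda>k. z k i) \<longlonglongrightarrow> z0 i)"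
    then have "\<forall>k. s k \<in> S" "s \<longlonglongrightarrow> s0" by auto
    then have "s0 \<in> S" using assms closed_sequential_limits by blast
    then show "(s0, z0) \<in> S \<times> UNIV" by simp
  qed
  moreover have "S = {s. \<exists>z. (s, z) \<in> S \<times> UNIV}" by auto
  ultimately show ?thesis unfolding good_def by blast
qed

lemma good_INT:
  assumes "\<And>n::nat. good (S n)" shows "good (\<Inter>n. S n)"
proof -
  from assms obtain Cn where Cn: "\<And>n. sclosed (Cn n)" "\<And>n. S n = {s. \<exists>z. (s, z) \<in> Cn n}"
    unfolding good_def by metis
  define C where "C = {(s, z). \<forall>n. (s, \<lambda>i. z (prod_encode (n, i))) \<in> Cn n}"
  have "sclosed C"
    unfolding sclosed_def
  proof (intro allI impI)
    fix s z s0 z0 assume H: "(\<forall>k. (s k, z k) \<in> C) \<and> s \<longlonglongrightarrow> s0 \<and> (\<forall>i. (\<lambda>k. z k i) \<longlonglongrightarrow> z0 i)"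
    show "(s0, z0) \<in> C" unfolding C_def
    proof (clarify)
      fix n
      show "(s0, \<lambda>i. z0 (prod_encode (n, i))) \<in> Cn n"
        by (rule sclosedD[OF Cn(1), of s "\<lambda>k i. z k (prod_encode (n, i))"]) (use H in \<open>auto simp: C_def\<close>)
    qed
  qed
  moreover have "(\<Inter>n. S n) = {s. \<exists>z. (s, z) \<in> C}"
  proof safe
    fix s assume "s \<in> (\<Inter>n. S n)"
    then have "\<forall>n. \<exists>z. (s, z) \<in> Cn n" using Cn(2) by auto
    then obtain zn where zn: "\<And>n. (s, zn n) \<in> Cn n" by metis
    define z where "z m = (case prod_decode m of (n, i) \<Rightarrow> zn n i)" for m
    have "(s, z) \<in> C" using zn by (simp add: C_def z_def)
    then show "\<exists>z. (s, z) \<in> C" by blast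
  next
    fix s z n assume "(s, z) \<in> C"
    then show "s \<in> S n" using Cn(2) by (auto simp: C_def)
  qed
  ultimately show ?thesis unfolding good_def by blast
qed

lemma good_UN:
  assumes "\<And>n::nat. good (S n)" shows "good (\<Union>n. S n)"
proof -
  from assms obtain Cn where Cn: "\<And>n. sclosed (Cn n)" "\<And>n. S n = {s. \<exists>z. (s, z) \<in> Cn n}"
    unfolding good_def by metis
  define C where "C = {(s, z). \<exists>n. z 0 = real n \<and> (s, \<lambda>i. z (Suc i)) \<in> Cn n}"
  have "sclosed C"
    unfolding sclosed_def
  proof (intro allI impI)
    fix s z s0 z0 assume H: "(\<forall>k. (s k, z k) \<in> C) \<and> s \<longlonglongrightarrow> s0 \<and> (\<forall>i. (\<lambda>k. z k i) \<longlonglongrightarrow> z0 i)"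
    then have "\<forall>k. \<exists>n. z k 0 = real n \<and> (s k, \<lambda>i. z k (Suc i)) \<in> Cn n"
      unfolding C_def by auto
    then obtain nk where nk: "\<And>k. z k 0 = real (nk k)" "\<And>k. (s k, \<lambda>i. z k (Suc i)) \<in> Cn (nk k)"
      by metis
    have "(\<lambda>k. z k 0) \<longlonglongrightarrow> z0 0" using H by simp
    from this[unfolded lim_sequentially, rule_format, of "1/2"]
    obtain N where N: "\<And>k. k \<ge> N \<Longrightarrow> dist (z k 0) (z0 0) < 1/2"
      by auto
    have eqN: "nk k = nk N" if "k \<ge> N" for k
    proof -
      have a: "\<bar>real (nk k) - z0 0\<bar> < 1/2" and b: "\<bar>real (nk N) - z0 0\<bar> < 1/2"
        using N[OF that] N[of N] nk(1)[of k] nk(1)[of N] by (auto simp: dist_real_def)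
      have "real (nk k) < real (nk N + 1)" "real (nk N) < real (nk k + 1)"
        using a b unfolding abs_less_iff by auto
      then have "nk k < nk N + 1" "nk N < nk k + 1"
        by (simp_all only: of_nat_less_iff)
      then show ?thesis by simp
    qed
    define n where "n = nk N"
    have lim0: "(\<lambda>k. z (k + N) 0) \<longlonglongrightarrow> z0 0"
      using H LIMSEQ_ignore_initial_segment[of "\<lambda>k. z k 0" "z0 0" N] by simp
    have "(\<lambda>k. z (k + N) 0) = (\<lambda>k. real n)"
    proof
      fix k show "z (k + N) 0 = real n"
        using nk(1)[of "k+N"] eqN[of "k+N"] by (simp add: n_def)
    qed
    with lim0 have "(\<lambda>k. real n) \<longlonglongrightarrow> z0 0" by simp
    then have z00: "z0 0 = real n" by (simp add: LIMSEQ_const_iff)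
    have "(s0, \<lambda>i. z0 (Suc i)) \<in> Cn n"
    proof (rule sclosedD[OF Cn(1), of "\<lambda>k. s (k + N)" "\<lambda>k i. z (k + N) (Suc i)"])
      show "(s (k + N), \<lambda>i. z (k + N) (Suc i)) \<in> Cn n" for k
        using nk(2)[of "k + N"] eqN[of "k+N"] by (simp add: n_def)
      show "(\<lambda>k. s (k + N)) \<longlonglongrightarrow> s0" using H LIMSEQ_ignore_initial_segment[of s s0 N] by simp
      show "(\<lambda>k. z (k + N) (Suc i)) \<longlonglongrightarrow> z0 (Suc i)" for i
        using H LIMSEQ_ignore_initial_segment[of "\<lambda>k. z k (Suc i)" "z0 (Suc i)" N] by simp
    qed
    then show "(s0, z0) \<in> C" using z00 by (auto simp: C_def)
  qed
  moreover have "(\<Union>n. S n) = {s. \<exists>z. (s, z) \<in> C}"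
  proof safe
    fix s n assume "s \<in> S n"
    then obtain z where z: "(s, z) \<in> Cn n" using Cn(2) by auto
    define z' where "z' i = (case i of 0 \<Rightarrow> real n | Suc j \<Rightarrow> z j)" for i
    have "(s, z') \<in> C" using z by (auto simp: C_def z'_def)
    then show "\<exists>z. (s, z) \<in> C" by blast
  next
    fix s z assume "(s, z) \<in> C"
    then show "s \<in> (\<Union>n. S n)" using Cn(2) by (auto simp: C_def)
  qed
  ultimately show ?thesis unfolding good_def by blast
qed

lemma good_open:
  fixes S :: "'a::metric_space set"
  assumes "open S" shows "good S"
proof (cases "S = UNIV")
  case True then show ?thesis using good_closed by auto
next
  case False
  define T where "T n = {x. 1 / real (Suc n) \<le> infdist x (- S)}" for n
  have cT: "closed (T n)" for n
    unfolding T_def by (intro closed_Collect_le continuous_intros)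
  have "S = (\<Union>n. T n)"
  proof safe
    fix x assume "x \<in> S"
    then have "infdist x (- S) > 0"
      using False assms by (intro infdist_pos_not_in_closed) auto
    then obtain n where "1 / real (Suc n) < infdist x (- S)"
      using reals_Archimedean[of "infdist x (- S)"] by (auto simp: inverse_eq_divide)
    then have "x \<in> T n" by (simp add: T_def)
    then show "x \<in> (\<Union>n. T n)" by blast
  next
    fix x n assume "x \<in> T n"
    then have le: "1 / real (Suc n) \<le> infdist x (- S)" by (simp add: T_def)
    have pos: "0 < 1 / real (Suc n)" by simp
    have "infdist x (- S) > 0" using le pos by linarith
    show "x \<in> S"
    proof (rule ccontr)
      assume "x \<notin> S"
      then have "infdist x (- S) = 0" by (intro infdist_zero) simp
      then show False using \<open>infdist x (- S) > 0\<close> by simp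
    qed
  qed
  then show ?thesis using good_UN[of T, OF good_closed[OF cT]] by simp
qed

lemma good_borel:
  fixes S :: "'a::metric_space set"
  assumes "S \<in> sets borel" shows "good S \<and> good (- S)"
proof -
  have "S \<in> sigma_sets UNIV {S. open S}" using assms sets_borel by blast
  then show ?thesis
  proof induction
    case (Basic a) then show ?case
      using good_open[of a] good_closed[OF closed_Compl[of a]] by auto
  next
    case Empty then show ?case using good_closed by auto
  next
    case (Compl a) then show ?case by (simp add: Compl_eq_Diff_UNIV[symmetric])
  next
    case (Union a) then show ?case
      using good_UN[of a] good_INT[of "\<lambda>n. - a n"] by auto
  qed
qed




lemma diag_conv:
  fixes f :: "nat \<Rightarrow> nat \<Rightarrow> real"
  assumes bdd: "\<And>k i. \<bar>f k i\<bar> \<le> M i"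
  shows "\<exists>d. strict_mono d \<and> (\<forall>i. convergent (\<lambda>k. f (d k) i))"
proof -
  let ?P = "\<lambda>n. \<lambda>s. convergent (\<lambda>k. f (s k) n)"
  interpret nat: subseqs ?P
  proof (unfold convergent_def, unfold subseqs_def, auto)
    fix n :: nat and s :: "nat \<Rightarrow> nat" assume s: "strict_mono s"
    have "bounded {-M n..M n}"
      using bounded_closed_interval by auto
    moreover have "\<And>k. f (s k) n \<in> {-M n..M n}"
      using bdd by (simp add: abs_le_iff minus_le_iff)
    ultimately have "\<exists>l s'. strict_mono s' \<and> ((\<lambda>k. f (s k) n) \<circ> s') \<longlonglongrightarrow> l"
      using compact_Icc compact_imp_seq_compact seq_compactE by metis
    thus "\<exists>s'. strict_mono (s'::nat\<Rightarrow>nat) \<and> (\<exists>l. (\<lambda>k. f (s (s' k)) n) \<longlonglongrightarrow> l)"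
      by (auto simp: comp_def)
  qed
  define d where "d = nat.diagseq"
  have subseq: "strict_mono d"
    unfolding d_def using nat.subseq_diagseq by auto
  have cnv: "?P n d" for n
  proof -
    have Pn_seqseq: "?P n (nat.seqseq (Suc n))"
      by (rule nat.seqseq_holds)
    have 1: "(\<lambda>k. f ((nat.seqseq (Suc n) \<circ> (\<lambda>k. nat.fold_reduce (Suc n) k
      (Suc n + k))) k) n) = (\<lambda>k. f (nat.seqseq (Suc n) k) n) \<circ>
      (\<lambda>k. nat.fold_reduce (Suc n) k (Suc n + k))"
      by auto
    have 2: "?P n (d \<circ> ((+) (Suc n)))"
      unfolding d_def nat.diagseq_seqseq 1
      by (intro convergent_subseq_convergent Pn_seqseq nat.subseq_diagonal_rest)
    then obtain L where 3: "(\<lambda>na. f (d (na + Suc n)) n) \<longlonglongrightarrow> L"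
      by (auto simp: add.commute dest: convergentD)
    then have "(\<lambda>k. f (d k) n) \<longlonglongrightarrow> L"
      by (rule LIMSEQ_offset)
    then show ?thesis
      by (auto simp: convergent_def)
  qed
  show ?thesis using subseq cnv by blast
qed

definition Proj :: "('a \<times> 'b) set \<Rightarrow> 'a set" where
  "Proj S = {y. \<exists>w. (y, w) \<in> S}"

definition Box :: "(nat \<Rightarrow> nat) \<Rightarrow> nat \<Rightarrow> (real \<times> (nat \<Rightarrow> real)) set" where
  "Box b n = {(y, w). \<bar>y\<bar> \<le> real (b 0) \<and> (\<forall>i<n. \<bar>w i\<bar> \<le> real (b (Suc i)))}"

lemma outer_choose:
  fixes \<mu> :: "'a measure"
  assumes "incseq A" "(\<Union>n. A n) = X" "t < outer_measure_of \<mu> X + e" and sp: "space \<mu> = UNIV"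
  shows "\<exists>n. t < outer_measure_of \<mu> (A n) + e"
proof -
  have "(SUP n. outer_measure_of \<mu> (A n)) = outer_measure_of \<mu> (\<Union>n. A n)"
    using assms(1) sp by (intro SUP_outer_measure_of_incseq) auto
  then have "t < (SUP n. outer_measure_of \<mu> (A n)) + e" using assms(2,3) by simp
  also have "\<dots> = (SUP n. outer_measure_of \<mu> (A n) + e)"
    by (rule ennreal_SUP_add_left[symmetric]) simp
  finally show ?thesis by (simp add: less_SUP_iff)
qed

lemma Box_Suc: "Box (b(Suc n := m)) (Suc n) = Box b n \<inter> {(y, w). \<bar>w n\<bar> \<le> real m}"
  by (auto simp: Box_def less_Suc_eq)

lemma Box_mono: "Box b (Suc n) \<subseteq> Box b n"
  by (auto simp: Box_def)

lemma Proj_mono: "S \<subseteq> T \<Longrightarrow> Proj S \<subseteq> Proj T"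
  by (auto simp: Proj_def)

lemma ennreal_less_add_pos:
  fixes t :: ennreal assumes "t < \<infinity>" "0 < e" shows "t < t + ennreal e"
proof -
  obtain r where r: "t = ennreal r" "0 \<le> r" using assms(1) by (cases t) auto
  then show ?thesis using assms(2) by (simp add: ennreal_plus[symmetric] ennreal_less_iff del: ennreal_plus)
qed

lemma inner_approx:
  fixes \<mu> :: "real measure"
  assumes fin: "finite_measure \<mu>" and sets: "sets \<mu> = sets borel" and C: "sclosed C" and e: "0 < e"
  shows "\<exists>W \<in> sets borel. W \<subseteq> Proj C \<and> outer_measure_of \<mu> (Proj C) \<le> emeasure \<mu> W + ennreal e"
proof -
  interpret finite_measure \<mu> by (rule fin)
  have space: "space \<mu> = UNIV" using sets_eq_imp_space_eq[OF sets] by simp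
  define t where "t = outer_measure_of \<mu> (Proj C)"
  have "t \<le> outer_measure_of \<mu> (space \<mu>)"
    unfolding t_def by (intro outer_measure_of_mono) (auto simp: space)
  also have "\<dots> = emeasure \<mu> (space \<mu>)" by simp
  also have "\<dots> < \<infinity>" by (simp add: less_top[symmetric])
  finally have tfin: "t < \<infinity>" .
  define Qp where "Qp n b \<longleftrightarrow> t < outer_measure_of \<mu> (Proj (C \<inter> Box b n)) + ennreal e" for n b
  have base: "\<exists>b. Qp 0 b"
  proof -
    have "\<exists>m. t < outer_measure_of \<mu> (Proj (C \<inter> Box (\<lambda>_. m) 0)) + ennreal e"
    proof (rule outer_choose)
      show "incseq (\<lambda>m. Proj (C \<inter> Box (\<lambda>_. m) 0))"
        by (auto simp: incseq_def Proj_def Box_def)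
      show "(\<Union>m. Proj (C \<inter> Box (\<lambda>_. m) 0)) = Proj C"
      proof safe
        fix y assume "y \<in> Proj C"
        then obtain w where "(y, w) \<in> C" by (auto simp: Proj_def)
        moreover have "\<bar>y\<bar> \<le> real (nat \<lceil>\<bar>y\<bar>\<rceil>)" by linarith
        ultimately have "(y, w) \<in> C \<inter> Box (\<lambda>_. nat \<lceil>\<bar>y\<bar>\<rceil>) 0"
          by (simp add: Box_def)
        then show "y \<in> (\<Union>m. Proj (C \<inter> Box (\<lambda>_. m) 0))"
          by (auto simp: Proj_def)
      qed (auto simp: Proj_def)
      show "t < outer_measure_of \<mu> (Proj C) + ennreal e"
        using ennreal_less_add_pos[OF tfin e] by (simp add: t_def)
      show "space \<mu> = UNIV" by (rule space)
    qed
    then show ?thesis by (auto simp: Qp_def)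
  qed
  have step: "\<exists>b'. Qp (Suc n) b' \<and> (\<forall>i\<le>n. b' i = b i)" if "Qp n b" for n b
  proof -
    have "\<exists>m. t < outer_measure_of \<mu> (Proj (C \<inter> Box (b(Suc n := m)) (Suc n))) + ennreal e"
    proof (rule outer_choose)
      show "incseq (\<lambda>m. Proj (C \<inter> Box (b(Suc n := m)) (Suc n)))"
        unfolding Box_Suc by (auto simp: incseq_def Proj_def)
      show "(\<Union>m. Proj (C \<inter> Box (b(Suc n := m)) (Suc n))) = Proj (C \<inter> Box b n)"
        unfolding Box_Suc
      proof safe
        fix y assume "y \<in> Proj (C \<inter> Box b n)"
        then obtain w where yw: "(y, w) \<in> C \<inter> Box b n" by (auto simp: Proj_def)
        define m0 where "m0 = nat \<lceil>\<bar>w n\<bar>\<rceil>"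
        have "\<bar>w n\<bar> \<le> real m0" unfolding m0_def by linarith
        with yw have "(y, w) \<in> C \<inter> (Box b n \<inter> {(y', w'). \<bar>w' n\<bar> \<le> real m0})"
          by simp
        then have "y \<in> Proj (C \<inter> (Box b n \<inter> {(y', w'). \<bar>w' n\<bar> \<le> real m0}))"
          unfolding Proj_def by (intro CollectI exI)
        then show "y \<in> (\<Union>m. Proj (C \<inter> (Box b n \<inter> {(y, w). \<bar>w n\<bar> \<le> real m})))"
          by (rule UN_I[OF UNIV_I])
      qed (auto simp: Proj_def)
      show "t < outer_measure_of \<mu> (Proj (C \<inter> Box b n)) + ennreal e"
        using that by (simp add: Qp_def)
      show "space \<mu> = UNIV" by (rule space)
    qed
    then obtain m where "Qp (Suc n) (b(Suc n := m))" by (auto simp: Qp_def)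
    then show ?thesis by (intro exI[of _ "b(Suc n := m)"]) auto
  qed
  obtain f where f: "\<And>n. Qp n (f n)" "\<And>n. \<forall>i\<le>n. f (Suc n) i = f n i"
    using dependent_nat_choice[of Qp "\<lambda>n b b'. \<forall>i\<le>n. b' i = b i", OF base step] by metis
  have agree: "i \<le> n \<Longrightarrow> f n i = f i i" for n i
  proof (induction n)
    case 0 then show ?case by simp
  next
    case (Suc n) then show ?case
      using f(2)[of n] by (cases "i = Suc n") auto
  qed
  define bb where "bb i = f i i" for i
  have BoxEq: "Box bb n = Box (f n) n" for n
    unfolding Box_def bb_def using agree[of 0 n] agree[of "Suc i" n for i]
    by (auto simp: Suc_le_eq)
  have Qbb: "t < outer_measure_of \<mu> (Proj (C \<inter> Box bb n)) + ennreal e" for n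
    using f(1)[of n] by (simp add: Qp_def BoxEq)
  define K where "K n = closure (Proj (C \<inter> Box bb n))" for n
  define W where "W = (\<Inter>n. K n)"
  have Ksets: "K n \<in> sets \<mu>" for n unfolding K_def sets by simp
  have "closed W" unfolding W_def K_def by auto
  then have Wb: "W \<in> sets borel" by simp
  have decK: "decseq K"
    unfolding decseq_Suc_iff K_def using Box_mono
    by (intro allI closure_mono Proj_mono) blast
  have lim: "(\<lambda>n. emeasure \<mu> (K n)) \<longlonglongrightarrow> emeasure \<mu> W"
    unfolding W_def using Ksets decK by (intro Lim_emeasure_decseq) auto
  have le: "t \<le> emeasure \<mu> (K n) + ennreal e" for n
  proof -
    have "outer_measure_of \<mu> (Proj (C \<inter> Box bb n)) \<le> outer_measure_of \<mu> (K n)"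
      unfolding K_def by (intro outer_measure_of_mono closure_subset)
    then show ?thesis using Qbb[of n] Ksets[of n] by (simp add: add_right_mono order.strict_implies_order order_less_le_trans)
  qed
  have "t \<le> emeasure \<mu> W + ennreal e"
    by (rule LIMSEQ_le_const[OF tendsto_add[OF lim tendsto_const]]) (use le in auto)
  moreover have "W \<subseteq> Proj C"
  proof
    fix x assume "x \<in> W"
    have "\<exists>p. (fst p, snd p) \<in> C \<inter> Box bb k \<and> dist (fst p) x < 1 / real (Suc k)" for k
    proof -
      have "x \<in> closure (Proj (C \<inter> Box bb k))" using \<open>x \<in> W\<close> by (auto simp: W_def K_def)
      then obtain y where y: "y \<in> Proj (C \<inter> Box bb k)" "dist y x < 1 / real (Suc k)"
        using closure_approachable[THEN iffD1, rule_format, of x _ "1 / real (Suc k)"] by auto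
      then obtain w where "(y, w) \<in> C \<inter> Box bb k" by (auto simp: Proj_def)
      then show ?thesis using y(2) by (intro exI[of _ "(y, w)"]) simp
    qed
    then obtain p where p: "\<And>k. (fst (p k), snd (p k)) \<in> C \<inter> Box bb k"
        "\<And>k. dist (fst (p k)) x < 1 / real (Suc k)"
      by metis
    define y where "y k = fst (p k)" for k
    define w where "w k = snd (p k)" for k
    define w' where "w' k i = (if i < k then w k i else 0)" for k i
    have bd: "\<bar>w' k i\<bar> \<le> real (bb (Suc i))" for k i
      using p(1)[of k] by (auto simp: w'_def w_def Box_def)
    obtain d where d: "strict_mono d" "\<And>i. convergent (\<lambda>k. w' (d k) i)"
      using diag_conv[of w' "\<lambda>i. real (bb (Suc i))"] bd by blast
    define z0 where "z0 i = lim (\<lambda>k. w' (d k) i)" for i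
    have wlim: "(\<lambda>k. w (d k) i) \<longlonglongrightarrow> z0 i" for i
    proof -
      have lim': "(\<lambda>k. w' (d k) i) \<longlonglongrightarrow> z0 i"
        using d(2) unfolding z0_def by (simp add: convergent_LIMSEQ_iff)
      have ev: "eventually (\<lambda>k. w' (d k) i = w (d k) i) sequentially"
        unfolding eventually_sequentially
      proof (intro exI allI impI)
        fix k assume "Suc i \<le> k"
        then have "i < d k" using seq_suble[OF d(1), of k] by linarith
        then show "w' (d k) i = w (d k) i" by (simp add: w'_def)
      qed
      show ?thesis by (rule tendsto_cong[OF ev, THEN iffD1, OF lim'])
    qed
    have ylim: "y \<longlonglongrightarrow> x"
      unfolding lim_sequentially
    proof (intro allI impI)
      fix r :: real assume "0 < r"
      from reals_Archimedean[OF this] obtain N where N: "inverse (real (Suc N)) < r" ..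
      show "\<exists>N. \<forall>n\<ge>N. dist (y n) x < r"
      proof (intro exI allI impI)
        fix n assume "N \<le> n"
        then have "1 / real (Suc n) \<le> 1 / real (Suc N)" by (simp add: frac_le)
        then show "dist (y n) x < r" using p(2)[of n] N unfolding y_def by (simp add: inverse_eq_divide)
      qed
    qed
    have ydlim: "(\<lambda>k. y (d k)) \<longlonglongrightarrow> x"
      using LIMSEQ_subseq_LIMSEQ[OF ylim d(1)] by (simp add: comp_def)
    have "(x, z0) \<in> C"
    proof (rule sclosedD[OF C, of "\<lambda>k. y (d k)" "\<lambda>k. w (d k)"])
      show "(y (d k), w (d k)) \<in> C" for k using p(1)[of "d k"] by (simp add: y_def w_def)
      show "(\<lambda>k. y (d k)) \<longlonglongrightarrow> x" by (rule ydlim)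
      show "(\<lambda>k. w (d k) i) \<longlonglongrightarrow> z0 i" for i by (rule wlim)
    qed
    then show "x \<in> Proj C" unfolding Proj_def by (intro CollectI exI)
  qed
  ultimately show ?thesis using Wb unfolding t_def by (intro bexI[of _ W] conjI)
qed




lemma proj_completion:
  fixes \<mu> :: "real measure"
  assumes fin: "finite_measure \<mu>" and sets: "sets \<mu> = sets borel" and C: "sclosed C"
  shows "Proj C \<in> sets (completion \<mu>)"
proof -
  interpret finite_measure \<mu> by (rule fin)
  have space: "space \<mu> = UNIV" using sets_eq_imp_space_eq[OF sets] by simp
  define t where "t = outer_measure_of \<mu> (Proj C)"
  have "\<forall>n. \<exists>W \<in> sets borel. W \<subseteq> Proj C \<and> t \<le> emeasure \<mu> W + ennreal (1 / real (Suc n))"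
  proof
    fix n :: nat
    have "0 < 1 / real (Suc n)" by simp
    then show "\<exists>W \<in> sets borel. W \<subseteq> Proj C \<and> t \<le> emeasure \<mu> W + ennreal (1 / real (Suc n))"
      unfolding t_def by (rule inner_approx[OF fin sets C])
  qed
  then obtain Wn where Wn: "\<And>n. Wn n \<in> sets borel" "\<And>n. Wn n \<subseteq> Proj C"
    "\<And>n. t \<le> emeasure \<mu> (Wn n) + ennreal (1 / real (Suc n))"
    by metis
  define W where "W = (\<Union>n. Wn n)"
  have Wsets: "W \<in> sets \<mu>" unfolding W_def sets using Wn(1) by auto
  have WP: "W \<subseteq> Proj C" unfolding W_def using Wn(2) by auto
  have tW: "t \<le> emeasure \<mu> W"
  proof (rule ennreal_le_epsilon)
    fix e :: real assume "0 < e"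
    from reals_Archimedean[OF this] obtain n where n: "inverse (real (Suc n)) < e" ..
    have "t \<le> emeasure \<mu> (Wn n) + ennreal (1 / real (Suc n))" by (rule Wn(3))
    also have "emeasure \<mu> (Wn n) \<le> emeasure \<mu> W"
      using Wsets by (intro emeasure_mono) (auto simp: W_def)
    also have "ennreal (1 / real (Suc n)) \<le> ennreal e"
      using n by (intro ennreal_leI) (simp add: inverse_eq_divide)
    finally show "t \<le> emeasure \<mu> W + ennreal e" by (simp add: add_mono)
  qed
  obtain H where H: "H \<in> sets \<mu>" "Proj C \<subseteq> H" "t = emeasure \<mu> H"
    using outer_measure_of_attain[of "Proj C" \<mu>] space unfolding t_def by auto
  have "emeasure \<mu> (H - W) = emeasure \<mu> H - emeasure \<mu> W"
    using H WP Wsets by (intro emeasure_Diff) auto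
  also have "emeasure \<mu> W \<le> emeasure \<mu> H"
    using H WP Wsets by (intro emeasure_mono) auto
  then have "emeasure \<mu> H = emeasure \<mu> W" using tW H(3) by simp
  finally have "emeasure \<mu> (H - W) = 0" by simp
  then have null: "H - W \<in> null_sets \<mu>" using H Wsets by (intro null_setsI) auto
  show ?thesis
    by (rule sets_completionI[of _ W "Proj C - W" "H - W"]) (use WP H null Wsets in auto)
qed

lemma good_proj_snd:
  fixes A :: "(real \<times> real) set"
  assumes "good A"
  shows "\<exists>C. sclosed C \<and> {y. \<exists>x. (x, y) \<in> A} = Proj C"
proof -
  obtain C2 where C2: "sclosed C2" "A = {s. \<exists>z. (s, z) \<in> C2}"
    using assms unfolding good_def by blast
  define C1 where "C1 = {(y, w). ((w 0, y), \<lambda>i. w (Suc i)) \<in> C2}"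
  have "sclosed C1"
    unfolding sclosed_def
  proof (intro allI impI)
    fix s z s0 z0 assume H: "(\<forall>k. (s k, z k) \<in> C1) \<and> s \<longlonglongrightarrow> s0 \<and> (\<forall>i. (\<lambda>k. z k i) \<longlonglongrightarrow> z0 i)"
    have "((z0 0, s0), \<lambda>i. z0 (Suc i)) \<in> C2"
    proof (rule sclosedD[OF C2(1), of "\<lambda>k. (z k 0, s k)" "\<lambda>k i. z k (Suc i)"])
      show "((z k 0, s k), \<lambda>i. z k (Suc i)) \<in> C2" for k using H by (simp add: C1_def)
      show "(\<lambda>k. (z k 0, s k)) \<longlonglongrightarrow> (z0 0, s0)" using H by (intro tendsto_Pair) auto
      show "(\<lambda>k. z k (Suc i)) \<longlonglongrightarrow> z0 (Suc i)" for i using H by simp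
    qed
    then show "(s0, z0) \<in> C1" by (simp add: C1_def)
  qed
  moreover have "{y. \<exists>x. (x, y) \<in> A} = Proj C1"
  proof safe
    fix y x assume "(x, y) \<in> A"
    then obtain z where "((x, y), z) \<in> C2" using C2(2) by auto
    then have "(y, \<lambda>i. case i of 0 \<Rightarrow> x | Suc j \<Rightarrow> z j) \<in> C1" by (simp add: C1_def)
    then show "y \<in> Proj C1" unfolding Proj_def by (intro CollectI exI)
  next
    fix y assume "y \<in> Proj C1"
    then obtain w where "((w 0, y), \<lambda>i. w (Suc i)) \<in> C2" by (auto simp: Proj_def C1_def)
    then have "(w 0, y) \<in> A" using C2(2) by blast
    then show "\<exists>x. (x, y) \<in> A" ..
  qed
  ultimately show ?thesis by blast
qed

lemma good_proj_fst:
  fixes A :: "(real \<times> real) set"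
  assumes "good A"
  shows "\<exists>C. sclosed C \<and> {y. \<exists>x. (y, x) \<in> A} = Proj C"
proof -
  obtain C2 where C2: "sclosed C2" "A = {s. \<exists>z. (s, z) \<in> C2}"
    using assms unfolding good_def by blast
  define C1 where "C1 = {(y, w). ((y, w 0), \<lambda>i. w (Suc i)) \<in> C2}"
  have "sclosed C1"
    unfolding sclosed_def
  proof (intro allI impI)
    fix s z s0 z0 assume H: "(\<forall>k. (s k, z k) \<in> C1) \<and> s \<longlonglongrightarrow> s0 \<and> (\<forall>i. (\<lambda>k. z k i) \<longlonglongrightarrow> z0 i)"
    have "((s0, z0 0), \<lambda>i. z0 (Suc i)) \<in> C2"
    proof (rule sclosedD[OF C2(1), of "\<lambda>k. (s k, z k 0)" "\<lambda>k i. z k (Suc i)"])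
      show "((s k, z k 0), \<lambda>i. z k (Suc i)) \<in> C2" for k using H by (simp add: C1_def)
      show "(\<lambda>k. (s k, z k 0)) \<longlonglongrightarrow> (s0, z0 0)" using H by (intro tendsto_Pair) auto
      show "(\<lambda>k. z k (Suc i)) \<longlonglongrightarrow> z0 (Suc i)" for i using H by simp
    qed
    then show "(s0, z0) \<in> C1" by (simp add: C1_def)
  qed
  moreover have "{y. \<exists>x. (y, x) \<in> A} = Proj C1"
  proof safe
    fix y x assume "(y, x) \<in> A"
    then obtain z where "((y, x), z) \<in> C2" using C2(2) by auto
    then have "(y, \<lambda>i. case i of 0 \<Rightarrow> x | Suc j \<Rightarrow> z j) \<in> C1" by (simp add: C1_def)
    then show "y \<in> Proj C1" unfolding Proj_def by (intro CollectI exI)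
  next
    fix y assume "y \<in> Proj C1"
    then obtain w where "((y, w 0), \<lambda>i. w (Suc i)) \<in> C2" by (auto simp: Proj_def C1_def)
    then have "(y, w 0) \<in> A" using C2(2) by blast
    then show "\<exists>x. (y, x) \<in> A" ..
  qed
  ultimately show ?thesis by blast
qed




lemma slice_completion:
  fixes P :: "(real \<times> bool) measure"
  assumes fin: "finite_measure P" and sP: "sets P = sets (borel \<Otimes>\<^sub>M count_space UNIV)"
    and T: "\<And>\<mu>::real measure. finite_measure \<mu> \<Longrightarrow> sets \<mu> = sets borel \<Longrightarrow> T \<in> sets (completion \<mu>)"
  shows "T \<times> {d} \<in> sets (completion P)"
proof -
  interpret finite_measure P by (rule fin)
  have spP: "space P = UNIV"
    using sets_eq_imp_space_eq[OF sP] by (simp add: space_pair_measure)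
  define R where "R = restrict_space P (UNIV \<times> {d})"
  have Rin: "UNIV \<times> {d} \<in> sets P" unfolding sP by (intro pair_measureI) auto
  have spR: "space R = UNIV \<times> {d}" unfolding R_def space_restrict_space spP by simp
  have meq: "measurable P borel = measurable (borel \<Otimes>\<^sub>M count_space UNIV) (borel :: real measure)"
    by (rule measurable_cong_sets[OF sP refl])
  have "fst \<in> measurable P borel"
    unfolding meq by (rule measurable_fst)
  then have fm: "fst \<in> measurable R borel" unfolding R_def by (rule measurable_restrict_space1)
  define \<mu> where "\<mu> = distr R borel fst"
  have smu: "sets \<mu> = sets borel" unfolding \<mu>_def by simp
  have em: "emeasure \<mu> B = emeasure P (B \<times> {d})" if B: "B \<in> sets borel" for B
  proof -
    have "emeasure \<mu> B = emeasure R (fst -` B \<inter> space R)"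
      unfolding \<mu>_def using fm B by (rule emeasure_distr)
    also have "fst -` B \<inter> space R = B \<times> {d}" unfolding spR by auto
    also have "emeasure R (B \<times> {d}) = emeasure P (B \<times> {d})"
      unfolding R_def using Rin spP by (intro emeasure_restrict_space) auto
    finally show ?thesis .
  qed
  have "finite_measure \<mu>"
  proof
    have "space \<mu> = UNIV" unfolding \<mu>_def by simp
    then have "emeasure \<mu> (space \<mu>) = emeasure P (UNIV \<times> {d})" using em[of UNIV] by simp
    then show "emeasure \<mu> (space \<mu>) \<noteq> \<infinity>" by (simp add: emeasure_finite)
  qed
  from T[OF this smu] obtain S N N' where SN: "T = S \<union> N" "N \<subseteq> N'" "N' \<in> null_sets \<mu>" "S \<in> sets \<mu>"
    by (rule sets_completionE)
  have N'b: "N' \<in> sets borel" using SN(3) smu by (auto simp: null_sets_def)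
  have "N' \<times> {d} \<in> null_sets P"
  proof (rule null_setsI)
    show "emeasure P (N' \<times> {d}) = 0" using em[OF N'b] SN(3) by (simp add: null_sets_def)
    show "N' \<times> {d} \<in> sets P" unfolding sP using N'b by (intro pair_measureI) auto
  qed
  moreover have "S \<times> {d} \<in> sets P" unfolding sP using SN(4) smu by (intro pair_measureI) auto
  ultimately show ?thesis
    by (intro sets_completionI[of _ "S \<times> {d}" "N \<times> {d}" "N' \<times> {d}"]) (use SN in auto)
qed

lemma U_completion:
  fixes P :: "(real \<times> bool) measure"
  assumes fin: "finite_measure P" and sP: "sets P = sets (borel \<Otimes>\<^sub>M count_space UNIV)"
    and A: "A \<in> sets (borel :: (real \<times> real) measure)"
  shows "U1 A \<times> {True} \<in> sets (completion P)" "U0 A \<times> {False} \<in> sets (completion P)"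
proof -
  have c1: "closed {p :: real \<times> real. fst p \<le> snd p}"
    by (intro closed_Collect_le continuous_intros)
  have c0: "closed {p :: real \<times> real. snd p \<le> fst p}"
    by (intro closed_Collect_le continuous_intros)
  have b1: "A \<inter> {p. fst p \<le> snd p} \<in> sets borel" using A c1 by auto
  have b0: "A \<inter> {p. snd p \<le> fst p} \<in> sets borel" using A c0 by auto
  obtain C1 where C1: "sclosed C1" "{y. \<exists>x. (x, y) \<in> A \<inter> {p. fst p \<le> snd p}} = Proj C1"
    using good_proj_snd good_borel[OF b1] by blast
  obtain C0 where C0: "sclosed C0" "{y. \<exists>x. (y, x) \<in> A \<inter> {p. snd p \<le> fst p}} = Proj C0"
    using good_proj_fst good_borel[OF b0] by blast
  have "U1 A = Proj C1" unfolding C1(2)[symmetric] U1_def by auto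
  then show "U1 A \<times> {True} \<in> sets (completion P)"
    using proj_completion[OF _ _ C1(1)] by (intro slice_completion[OF fin sP]) simp
  have "U0 A = Proj C0" unfolding C0(2)[symmetric] U0_def by auto
  then show "U0 A \<times> {False} \<in> sets (completion P)"
    using proj_completion[OF _ _ C0(1)] by (intro slice_completion[OF fin sP]) simp
qed




lemma inner_part:
  "\<exists>G \<in> sets P. G \<subseteq> X \<and> measure (completion P) X = measure P G"
proof (cases "X \<in> sets (completion P)")
  case True
  have "measure (completion P) X = measure P (main_part P X)"
    using True by (simp add: measure_def)
  moreover have "main_part P X \<subseteq> X" using main_part_null_part_Un[OF True] by blast
  ultimately show ?thesis using main_part_sets[OF True] by blast
next
  case False
  then show ?thesis by (intro bexI[of _ "{}"]) (auto simp: measure_notin_sets)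
qed

lemma outer_part:
  assumes X: "X \<in> sets (completion P)"
  shows "\<exists>H \<in> sets P. X \<subseteq> H \<and> measure (completion P) X = measure P H"
proof -
  obtain N where N: "N \<in> null_sets P" "null_part P X \<subseteq> N" using null_part[OF X] by blast
  define H where "H = main_part P X \<union> N"
  have Hs: "H \<in> sets P" using main_part_sets[OF X] N(1) by (auto simp: H_def)
  have "X \<subseteq> H" using main_part_null_part_Un[OF X] N(2) by (auto simp: H_def)
  moreover have "measure P H = measure P (main_part P X)"
    unfolding H_def measure_def using main_part_sets[OF X] N(1) by (simp add: emeasure_Un_null_set)
  moreover have "measure (completion P) X = measure P (main_part P X)"
    using X by (simp add: measure_def)
  ultimately show ?thesis using Hs by auto
qed

lemma necessary:
  fixes P :: "(real \<times> bool) measure" and \<nu> :: "(real \<times> real) measure"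
  assumes finP: "finite_measure P" and sP: "sets P = sets (borel \<Otimes>\<^sub>M count_space UNIV)"
    and R: "roy_realization M Yt Dt Y0 Y1 P \<nu>"
  shows "sharp_bounds P \<nu>"
proof -
  interpret finite_measure P by (rule finP)
  from R have ps: "prob_space M" and mYt: "Yt \<in> borel_measurable M"
    and mDt: "Dt \<in> measurable M (count_space UNIV)"
    and mY0: "Y0 \<in> borel_measurable M" and mY1: "Y1 \<in> borel_measurable M"
    and Pdef: "distr M (borel \<Otimes>\<^sub>M count_space UNIV) (\<lambda>\<omega>. (Yt \<omega>, Dt \<omega>)) = P"
    and nudef: "distr M borel (\<lambda>\<omega>. (Y0 \<omega>, Y1 \<omega>)) = \<nu>"
    and Yeq: "\<forall>\<omega> \<in> space M. Yt \<omega> = (if Dt \<omega> then Y1 \<omega> else Y0 \<omega>)"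
    and AEs: "AE \<omega> in M. (Y1 \<omega> > Y0 \<omega> \<longrightarrow> Dt \<omega>) \<and> (Y1 \<omega> < Y0 \<omega> \<longrightarrow> \<not> Dt \<omega>)"
    unfolding roy_realization_def by auto
  interpret M: prob_space M by (rule ps)
  have mYD: "(\<lambda>\<omega>. (Yt \<omega>, Dt \<omega>)) \<in> measurable M (borel \<Otimes>\<^sub>M count_space UNIV)"
    using mYt mDt by (intro measurable_Pair)
  have mYY: "(\<lambda>\<omega>. (Y0 \<omega>, Y1 \<omega>)) \<in> borel_measurable M"
    using mY0 mY1 by (intro borel_measurable_Pair)
  have PG: "measure P G = measure M ((\<lambda>\<omega>. (Yt \<omega>, Dt \<omega>)) -` G \<inter> space M)" if "G \<in> sets P" for G
    using that unfolding Pdef[symmetric] by (intro measure_distr[OF mYD]) (simp add: sP)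
  have nuA: "measure \<nu> A = measure M ((\<lambda>\<omega>. (Y0 \<omega>, Y1 \<omega>)) -` A \<inter> space M)" if "A \<in> sets borel" for A
    unfolding nudef[symmetric] by (rule measure_distr[OF mYY that])
  show ?thesis
    unfolding sharp_bounds_def
  proof (intro ballI conjI)
    fix A :: "(real \<times> real) set" assume A: "A \<in> sets borel"
    have YYA: "(\<lambda>\<omega>. (Y0 \<omega>, Y1 \<omega>)) -` A \<inter> space M \<in> sets M" using mYY A by measurable
    obtain G0 where G0: "G0 \<in> sets P" "G0 \<subseteq> L0 A \<times> {False}"
      "measure (completion P) (L0 A \<times> {False}) = measure P G0"
      using inner_part[of P "L0 A \<times> {False}"] by blast
    obtain G1 where G1: "G1 \<in> sets P" "G1 \<subseteq> L1 A \<times> {True}"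
      "measure (completion P) (L1 A \<times> {True}) = measure P G1"
      using inner_part[of P "L1 A \<times> {True}"] by blast
    have "measure P G0 + measure P G1 = measure P (G0 \<union> G1)"
      using G0 G1 by (intro finite_measure_Union[symmetric]) auto
    also have "\<dots> = measure M ((\<lambda>\<omega>. (Yt \<omega>, Dt \<omega>)) -` (G0 \<union> G1) \<inter> space M)"
      using G0 G1 by (intro PG) auto
    also have "\<dots> \<le> measure M ((\<lambda>\<omega>. (Y0 \<omega>, Y1 \<omega>)) -` A \<inter> space M)"
    proof (rule M.finite_measure_mono_AE[OF _ YYA])
      show "AE \<omega> in M. \<omega> \<in> (\<lambda>\<omega>. (Yt \<omega>, Dt \<omega>)) -` (G0 \<union> G1) \<inter> space M \<longrightarrow>
                      \<omega> \<in> (\<lambda>\<omega>. (Y0 \<omega>, Y1 \<omega>)) -` A \<inter> space M"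
        using AEs
      proof (rule AE_mp, intro AE_I2 impI)
        fix \<omega> assume \<omega>: "\<omega> \<in> space M"
          and H: "(Y0 \<omega> < Y1 \<omega> \<longrightarrow> Dt \<omega>) \<and> (Y1 \<omega> < Y0 \<omega> \<longrightarrow> \<not> Dt \<omega>)"
          and In: "\<omega> \<in> (\<lambda>\<omega>. (Yt \<omega>, Dt \<omega>)) -` (G0 \<union> G1) \<inter> space M"
        have Y: "Yt \<omega> = (if Dt \<omega> then Y1 \<omega> else Y0 \<omega>)" using Yeq \<omega> by auto
        have "(Y0 \<omega>, Y1 \<omega>) \<in> A"
        proof (cases "Dt \<omega>")
          case True
          then have "(Yt \<omega>, True) \<in> G1" using In G0(2) by auto
          then have "Y1 \<omega> \<in> L1 A" using G1(2) Y True by auto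
          moreover have "Y0 \<omega> \<le> Y1 \<omega>" using H True by auto
          ultimately show ?thesis by (auto simp: L1_def)
        next
          case False
          then have "(Yt \<omega>, False) \<in> G0" using In G1(2) by auto
          then have "Y0 \<omega> \<in> L0 A" using G0(2) Y False by auto
          moreover have "Y1 \<omega> \<le> Y0 \<omega>" using H False by auto
          ultimately show ?thesis by (auto simp: L0_def)
        qed
        then show "\<omega> \<in> (\<lambda>\<omega>. (Y0 \<omega>, Y1 \<omega>)) -` A \<inter> space M" using \<omega> by auto
      qed
    qed
    also have "\<dots> = measure \<nu> A" using nuA[OF A] by simp
    finally show "measure (completion P) (L0 A \<times> {False}) + measure (completion P) (L1 A \<times> {True})
         \<le> measure \<nu> A" using G0(3) G1(3) by simp
    obtain H0 where H0: "H0 \<in> sets P" "U0 A \<times> {False} \<subseteq> H0"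
      "measure (completion P) (U0 A \<times> {False}) = measure P H0"
      using outer_part[OF U_completion(2)[OF finP sP A]] by blast
    obtain H1 where H1: "H1 \<in> sets P" "U1 A \<times> {True} \<subseteq> H1"
      "measure (completion P) (U1 A \<times> {True}) = measure P H1"
      using outer_part[OF U_completion(1)[OF finP sP A]] by blast
    have H01: "H0 \<union> H1 \<in> sets P" using H0 H1 by auto
    have YDH: "(\<lambda>\<omega>. (Yt \<omega>, Dt \<omega>)) -` (H0 \<union> H1) \<inter> space M \<in> sets M"
      using measurable_sets[OF mYD, of "H0 \<union> H1"] H01 sP by simp
    have "measure \<nu> A = measure M ((\<lambda>\<omega>. (Y0 \<omega>, Y1 \<omega>)) -` A \<inter> space M)" by (rule nuA[OF A])
    also have "\<dots> \<le> measure M ((\<lambda>\<omega>. (Yt \<omega>, Dt \<omega>)) -` (H0 \<union> H1) \<inter> space M)"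
    proof (rule M.finite_measure_mono_AE[OF _ YDH])
      show "AE \<omega> in M. \<omega> \<in> (\<lambda>\<omega>. (Y0 \<omega>, Y1 \<omega>)) -` A \<inter> space M \<longrightarrow>
                      \<omega> \<in> (\<lambda>\<omega>. (Yt \<omega>, Dt \<omega>)) -` (H0 \<union> H1) \<inter> space M"
        using AEs
      proof (rule AE_mp, intro AE_I2 impI)
        fix \<omega> assume \<omega>: "\<omega> \<in> space M"
          and H: "(Y0 \<omega> < Y1 \<omega> \<longrightarrow> Dt \<omega>) \<and> (Y1 \<omega> < Y0 \<omega> \<longrightarrow> \<not> Dt \<omega>)"
          and In: "\<omega> \<in> (\<lambda>\<omega>. (Y0 \<omega>, Y1 \<omega>)) -` A \<inter> space M"
        have Y: "Yt \<omega> = (if Dt \<omega> then Y1 \<omega> else Y0 \<omega>)" using Yeq \<omega> by auto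
        have "(Yt \<omega>, Dt \<omega>) \<in> H0 \<union> H1"
        proof (cases "Dt \<omega>")
          case True
          then have "Y0 \<omega> \<le> Y1 \<omega>" using H by auto
          then have "Y1 \<omega> \<in> U1 A" using In unfolding U1_def by auto
          then show ?thesis using H1(2) Y True by auto
        next
          case False
          then have "Y1 \<omega> \<le> Y0 \<omega>" using H by auto
          then have "Y0 \<omega> \<in> U0 A" using In unfolding U0_def by auto
          then show ?thesis using H0(2) Y False by auto
        qed
        then show "\<omega> \<in> (\<lambda>\<omega>. (Yt \<omega>, Dt \<omega>)) -` (H0 \<union> H1) \<inter> space M" using \<omega> by auto
      qed
    qed
    also have "\<dots> = measure P (H0 \<union> H1)" using PG[OF H01] by simp
    also have "\<dots> \<le> measure P H0 + measure P H1" using H0 H1 by (intro measure_Un_le) auto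
    finally show "measure \<nu> A
         \<le> measure (completion P) (U0 A \<times> {False}) + measure (completion P) (U1 A \<times> {True})"
      using H0(3) H1(3) by simp
  qed
qed




definition addm :: "'a measure \<Rightarrow> 'a measure \<Rightarrow> 'a measure" where
  "addm M N = measure_of (space M) (sets M) (\<lambda>A. emeasure M A + emeasure N A)"

lemma space_addm[simp]: "space (addm M N) = space M"
  and sets_addm[simp]: "sets (addm M N) = sets M"
  by (auto simp: addm_def)

lemma emeasure_addm:
  assumes "sets N = sets M"
  shows "emeasure (addm M N) A = emeasure M A + emeasure N A"
proof (cases "A \<in> sets M")
  case True
  show ?thesis unfolding addm_def
  proof (rule emeasure_measure_of_sigma)
    show "sigma_algebra (space M) (sets M)" ..
    show "positive (sets M) (\<lambda>A. emeasure M A + emeasure N A)"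
      by (simp add: positive_def)
    show "countably_additive (sets M) (\<lambda>A. emeasure M A + emeasure N A)"
    proof (rule countably_additiveI)
      fix F :: "nat \<Rightarrow> 'a set" assume F: "range F \<subseteq> sets M" "disjoint_family F"
      have "(\<Sum>i. emeasure M (F i) + emeasure N (F i)) = (\<Sum>i. emeasure M (F i)) + (\<Sum>i. emeasure N (F i))"
        by (rule suminf_add[symmetric]) (auto intro: summableI)
      also have "(\<Sum>i. emeasure M (F i)) = emeasure M (\<Union>i. F i)"
        using F by (intro suminf_emeasure) auto
      also have "(\<Sum>i. emeasure N (F i)) = emeasure N (\<Union>i. F i)"
        using F assms by (intro suminf_emeasure) auto
      finally show "(\<Sum>i. emeasure M (F i) + emeasure N (F i)) = emeasure M (\<Union>i. F i) + emeasure N (\<Union>i. F i)" .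
    qed
    show "A \<in> sets M" by fact
  qed
next
  case False
  then show ?thesis using assms by (simp add: emeasure_notin_sets)
qed

definition S1 :: "real set \<Rightarrow> (real \<times> real) set" where
  "S1 B = {p. fst p < snd p \<and> snd p \<in> B}"
definition S0 :: "real set \<Rightarrow> (real \<times> real) set" where
  "S0 B = {p. snd p < fst p \<and> fst p \<in> B}"
definition Dg :: "real set \<Rightarrow> (real \<times> real) set" where
  "Dg B = {p. fst p = snd p \<and> fst p \<in> B}"

lemma fst_bm[measurable]: "(fst :: real \<times> real \<Rightarrow> real) \<in> borel_measurable borel"
  by (intro borel_measurable_continuous_onI continuous_intros)
lemma snd_bm[measurable]: "(snd :: real \<times> real \<Rightarrow> real) \<in> borel_measurable borel"
  by (intro borel_measurable_continuous_onI continuous_intros)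

lemma pre_fst: "B \<in> sets borel \<Longrightarrow> fst -` B \<in> sets (borel :: (real \<times> real) measure)"
  using measurable_sets[OF fst_bm, of B] by simp
lemma pre_snd: "B \<in> sets borel \<Longrightarrow> snd -` B \<in> sets (borel :: (real \<times> real) measure)"
  using measurable_sets[OF snd_bm, of B] by simp

lemma S1_borel: "B \<in> sets borel \<Longrightarrow> S1 B \<in> sets borel"
proof -
  assume B: "B \<in> sets borel"
  have "S1 B = {p. fst p < snd p} \<inter> snd -` B" by (auto simp: S1_def)
  moreover have "open {p :: real \<times> real. fst p < snd p}" by (intro open_Collect_less continuous_intros)
  ultimately show ?thesis using pre_snd[OF B] by auto
qed
lemma S0_borel: "B \<in> sets borel \<Longrightarrow> S0 B \<in> sets borel"
proof -
  assume B: "B \<in> sets borel"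
  have "S0 B = {p. snd p < fst p} \<inter> fst -` B" by (auto simp: S0_def)
  moreover have "open {p :: real \<times> real. snd p < fst p}" by (intro open_Collect_less continuous_intros)
  ultimately show ?thesis using pre_fst[OF B] by auto
qed
lemma Dg_borel: "B \<in> sets borel \<Longrightarrow> Dg B \<in> sets borel"
proof -
  assume B: "B \<in> sets borel"
  have "Dg B = {p. fst p = snd p} \<inter> fst -` B" by (auto simp: Dg_def)
  moreover have "closed {p :: real \<times> real. fst p = snd p}" by (intro closed_Collect_eq continuous_intros)
  ultimately show ?thesis using pre_fst[OF B] by auto
qed

lemma bounds_consequences:
  fixes P :: "(real \<times> bool) measure" and \<nu> :: "(real \<times> real) measure"
  assumes sP: "sets P = sets (borel \<Otimes>\<^sub>M count_space UNIV)" and sn: "sets \<nu> = sets borel"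
    and SB: "sharp_bounds P \<nu>" and B: "B \<in> sets borel"
  shows "measure \<nu> (S1 B) \<le> measure P (B \<times> {True})"
    and "measure \<nu> (S0 B) \<le> measure P (B \<times> {False})"
    and "measure \<nu> (S1 B \<union> S0 B \<union> Dg B) = measure P (B \<times> {False}) + measure P (B \<times> {True})"
proof -
  have inP: "B \<times> {d} \<in> sets P" for d unfolding sP using B by (intro pair_measureI) auto
  have e0: "{} \<in> sets P" by simp
  have "U1 (S1 B) = B"
  proof safe
    fix y assume "y \<in> B"
    then show "y \<in> U1 (S1 B)" unfolding U1_def S1_def by (intro CollectI exI[of _ "y - 1"]) auto
  qed (auto simp: U1_def S1_def)
  moreover have "U0 (S1 B) = {}" by (auto simp: U0_def S1_def)
  ultimately show "measure \<nu> (S1 B) \<le> measure P (B \<times> {True})"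
    using SB S1_borel[OF B] inP[of True] unfolding sharp_bounds_def by fastforce
  have "U0 (S0 B) = B"
  proof safe
    fix y assume "y \<in> B"
    then show "y \<in> U0 (S0 B)" unfolding U0_def S0_def by (intro CollectI exI[of _ "y - 1"]) auto
  qed (auto simp: U0_def S0_def)
  moreover have "U1 (S0 B) = {}" by (auto simp: U1_def S0_def)
  ultimately show "measure \<nu> (S0 B) \<le> measure P (B \<times> {False})"
    using SB S0_borel[OF B] inP[of False] unfolding sharp_bounds_def by fastforce
  define A where "A = S1 B \<union> S0 B \<union> Dg B"
  have Ab: "A \<in> sets borel" unfolding A_def using S1_borel[OF B] S0_borel[OF B] Dg_borel[OF B] by auto
  have "U1 A = B" "U0 A = B" "L1 A = B" "L0 A = B"
    unfolding A_def U1_def U0_def L1_def L0_def S1_def S0_def Dg_def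
    by (auto simp: not_less) (metis order.order_iff_strict)+
  then show "measure \<nu> (S1 B \<union> S0 B \<union> Dg B) = measure P (B \<times> {False}) + measure P (B \<times> {True})"
    using SB Ab inP[of True] inP[of False] unfolding sharp_bounds_def A_def[symmetric]
    by (metis (no_types, lifting) measure_completion antisym)
qed




lemma emeasure_distr_restrict:
  assumes S: "S \<in> sets Q" and h: "h \<in> measurable Q N" and E: "E \<in> sets N"
  shows "emeasure (distr (restrict_space Q S) N h) E = emeasure Q (S \<inter> h -` E)"
proof -
  have h': "h \<in> measurable (restrict_space Q S) N" by (rule measurable_restrict_space1[OF h])
  have "emeasure (distr (restrict_space Q S) N h) E = emeasure (restrict_space Q S) (h -` E \<inter> space (restrict_space Q S))"
    by (rule emeasure_distr[OF h' E])
  also have "space (restrict_space Q S) = S" using S by simp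
  also have "emeasure (restrict_space Q S) (h -` E \<inter> S) = emeasure Q (h -` E \<inter> S)"
    using S sets.sets_into_space[OF S] by (intro emeasure_restrict_space) (auto simp: Int_absorb2)
  finally show ?thesis by (simp add: Int_commute)
qed

lemma finite_distr_restrict:
  assumes "finite_measure Q" "S \<in> sets Q" "h \<in> measurable Q N"
  shows "finite_measure (distr (restrict_space Q S) N h)"
proof -
  interpret R: finite_measure "restrict_space Q S" by (rule finite_measure_restrict_space[OF assms(1,2)])
  show ?thesis by (rule R.finite_measure_distr[OF measurable_restrict_space1[OF assms(3)]])
qed




lemma sufficient:
  fixes P :: "(real \<times> bool) measure" and \<nu> :: "(real \<times> real) measure"
  assumes pP: "prob_space P" and sP: "sets P = sets (borel \<Otimes>\<^sub>M count_space UNIV)"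
    and pn: "prob_space \<nu>" and sn: "sets \<nu> = sets borel"
    and SB: "sharp_bounds P \<nu>"
  shows "\<exists>(M :: ((real \<times> bool) \<times> (real \<times> real)) measure) Yt Dt Y0 Y1.
               roy_realization M Yt Dt Y0 Y1 P \<nu>"
proof -
  interpret P: prob_space P by (rule pP)
  interpret n: prob_space \<nu> by (rule pn)
  define \<Omega> where "\<Omega> = ((borel :: real measure) \<Otimes>\<^sub>M (count_space UNIV :: bool measure)) \<Otimes>\<^sub>M (borel :: (real \<times> real) measure)"
  define Lt where "Lt = {p :: real \<times> real. fst p < snd p}"
  define Gt where "Gt = {p :: real \<times> real. snd p < fst p}"
  have Lts: "Lt \<in> sets \<nu>" unfolding sn Lt_def by (intro borel_open open_Collect_less continuous_intros)
  have Gts: "Gt \<in> sets \<nu>" unfolding sn Gt_def by (intro borel_open open_Collect_less continuous_intros)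
  define f1 where "f1 p = ((snd p, True), p)" for p :: "real \<times> real"
  define f0 where "f0 p = ((fst p, False), p)" for p :: "real \<times> real"
  define g1 where "g1 y = ((y, True), (y, y))" for y :: real
  define g0 where "g0 y = ((y, False), (y, y))" for y :: real
  have mid: "(\<lambda>y::real. (y, y)) \<in> borel_measurable borel"
    by (intro borel_measurable_Pair) auto
  have mf1: "f1 \<in> measurable \<nu> \<Omega>"
    unfolding measurable_cong_sets[OF sn refl] f1_def \<Omega>_def
    by (intro measurable_Pair measurable_ident snd_bm measurable_const) auto
  have mf0: "f0 \<in> measurable \<nu> \<Omega>"
    unfolding measurable_cong_sets[OF sn refl] f0_def \<Omega>_def
    by (intro measurable_Pair measurable_ident fst_bm measurable_const) auto
  have mg1: "g1 \<in> measurable borel \<Omega>"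
    unfolding g1_def \<Omega>_def by (intro measurable_Pair measurable_ident mid measurable_const) auto
  have mg0: "g0 \<in> measurable borel \<Omega>"
    unfolding g0_def \<Omega>_def by (intro measurable_Pair measurable_ident mid measurable_const) auto
  have mfstP: "fst \<in> measurable P (borel :: real measure)"
    unfolding measurable_cong_sets[OF sP refl] by (rule measurable_fst)
  have UT: "UNIV \<times> {d} \<in> sets P" for d unfolding sP by (intro pair_measureI) auto
  define PT where "PT = distr (restrict_space P (UNIV \<times> {True})) borel fst"
  define PF where "PF = distr (restrict_space P (UNIV \<times> {False})) borel fst"
  define \<nu>1 where "\<nu>1 = distr (restrict_space \<nu> Lt) borel snd"
  define \<nu>0 where "\<nu>0 = distr (restrict_space \<nu> Gt) borel fst"
  have msnd: "snd \<in> measurable \<nu> (borel :: real measure)"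
    unfolding measurable_cong_sets[OF sn refl] by (rule snd_bm)
  have mfst: "fst \<in> measurable \<nu> (borel :: real measure)"
    unfolding measurable_cong_sets[OF sn refl] by (rule fst_bm)
  have ePT: "emeasure PT B = emeasure P (B \<times> {True})" if "B \<in> sets borel" for B
  proof -
    have "(UNIV \<times> {True}) \<inter> fst -` B = B \<times> {True}" by auto
    then show ?thesis unfolding PT_def using emeasure_distr_restrict[OF UT mfstP that] by simp
  qed
  have ePF: "emeasure PF B = emeasure P (B \<times> {False})" if "B \<in> sets borel" for B
  proof -
    have "(UNIV \<times> {False}) \<inter> fst -` B = B \<times> {False}" by auto
    then show ?thesis unfolding PF_def using emeasure_distr_restrict[OF UT mfstP that] by simp
  qed
  have e\<nu>1: "emeasure \<nu>1 B = emeasure \<nu> (S1 B)" if "B \<in> sets borel" for B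
    unfolding \<nu>1_def using emeasure_distr_restrict[OF Lts msnd that]
    by (simp add: S1_def Lt_def Int_def)
  have e\<nu>0: "emeasure \<nu>0 B = emeasure \<nu> (S0 B)" if "B \<in> sets borel" for B
    unfolding \<nu>0_def using emeasure_distr_restrict[OF Gts mfst that]
    by (simp add: S0_def Gt_def Int_def)
  have fPT: "finite_measure PT" unfolding PT_def
    by (rule finite_distr_restrict[OF _ UT mfstP]) (rule P.finite_measure_axioms)
  have fPF: "finite_measure PF" unfolding PF_def
    by (rule finite_distr_restrict[OF _ UT mfstP]) (rule P.finite_measure_axioms)
  have f\<nu>1: "finite_measure \<nu>1" unfolding \<nu>1_def
    by (rule finite_distr_restrict[OF _ Lts msnd]) (rule n.finite_measure_axioms)
  have f\<nu>0: "finite_measure \<nu>0" unfolding \<nu>0_def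
    by (rule finite_distr_restrict[OF _ Gts mfst]) (rule n.finite_measure_axioms)
  have sPT: "sets PT = sets borel" "sets PF = sets borel" "sets \<nu>1 = sets borel" "sets \<nu>0 = sets borel"
    by (simp_all add: PT_def PF_def \<nu>1_def \<nu>0_def)
  have inP: "B \<times> {d} \<in> sets P" if "B \<in> sets borel" for B d unfolding sP using that by (intro pair_measureI) auto
  have bS1: "S1 B \<in> sets \<nu>" "S0 B \<in> sets \<nu>" "Dg B \<in> sets \<nu>" if "B \<in> sets borel" for B
    using S1_borel[OF that] S0_borel[OF that] Dg_borel[OF that] sn by auto
  define a where "a B = measure \<nu> (S1 B)" for B
  define b where "b B = measure \<nu> (S0 B)" for B
  define c where "c B = measure P (B \<times> {True})" for B
  define d where "d B = measure P (B \<times> {False})" for B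
  have ac: "a B \<le> c B" "b B \<le> d B" "measure \<nu> (S1 B \<union> S0 B \<union> Dg B) = d B + c B" if "B \<in> sets borel" for B
    using bounds_consequences[OF sP sn SB that] unfolding a_def b_def c_def d_def by auto
  define \<alpha>1 where "\<alpha>1 = diff_measure PT \<nu>1"
  define \<alpha>0 where "\<alpha>0 = diff_measure PF \<nu>0"
  have e\<alpha>1: "emeasure \<alpha>1 B = ennreal (c B - a B)" if B: "B \<in> sets borel" for B
  proof -
    have "emeasure \<alpha>1 B = emeasure PT B - emeasure \<nu>1 B"
      unfolding \<alpha>1_def
    proof (rule emeasure_diff_measure[OF fPT f\<nu>1])
      show "sets PT = sets \<nu>1" using sPT by simp
      show "B \<in> sets PT" using B sPT by simp
      fix A assume "A \<in> sets PT"
      then have A: "A \<in> sets borel" using sPT by simp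
      show "emeasure \<nu>1 A \<le> emeasure PT A"
        using ac(1)[OF A] e\<nu>1[OF A] ePT[OF A] bS1(1)[OF A] inP[OF A]
        by (simp add: n.emeasure_eq_measure P.emeasure_eq_measure a_def c_def)
    qed
    also have "\<dots> = ennreal (c B) - ennreal (a B)"
      using e\<nu>1[OF B] ePT[OF B] by (simp add: n.emeasure_eq_measure P.emeasure_eq_measure a_def c_def)
    also have "\<dots> = ennreal (c B - a B)" by (rule ennreal_minus) (simp add: a_def)
    finally show ?thesis .
  qed
  have e\<alpha>0: "emeasure \<alpha>0 B = ennreal (d B - b B)" if B: "B \<in> sets borel" for B
  proof -
    have "emeasure \<alpha>0 B = emeasure PF B - emeasure \<nu>0 B"
      unfolding \<alpha>0_def
    proof (rule emeasure_diff_measure[OF fPF f\<nu>0])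
      show "sets PF = sets \<nu>0" using sPT by simp
      show "B \<in> sets PF" using B sPT by simp
      fix A assume "A \<in> sets PF"
      then have A: "A \<in> sets borel" using sPT by simp
      show "emeasure \<nu>0 A \<le> emeasure PF A"
        using ac(2)[OF A] e\<nu>0[OF A] ePF[OF A] bS1(2)[OF A] inP[OF A]
        by (simp add: n.emeasure_eq_measure P.emeasure_eq_measure b_def d_def)
    qed
    also have "\<dots> = ennreal (d B) - ennreal (b B)"
      using e\<nu>0[OF B] ePF[OF B] by (simp add: n.emeasure_eq_measure P.emeasure_eq_measure b_def d_def)
    also have "\<dots> = ennreal (d B - b B)" by (rule ennreal_minus) (simp add: b_def)
    finally show ?thesis .
  qed
  have s\<alpha>: "sets \<alpha>1 = sets borel" "sets \<alpha>0 = sets borel" "space \<alpha>1 = UNIV" "space \<alpha>0 = UNIV"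
    using sPT by (simp_all add: \<alpha>1_def \<alpha>0_def PT_def PF_def)
  define m1 where "m1 = distr (restrict_space \<nu> Lt) \<Omega> f1"
  define m0 where "m0 = distr (restrict_space \<nu> Gt) \<Omega> f0"
  define t1 where "t1 = distr \<alpha>1 \<Omega> g1"
  define t0 where "t0 = distr \<alpha>0 \<Omega> g0"
  define M where "M = addm (addm m1 m0) (addm t1 t0)"
  have mg1': "g1 \<in> measurable \<alpha>1 \<Omega>" unfolding measurable_cong_sets[OF s\<alpha>(1) refl] by (rule mg1)
  have mg0': "g0 \<in> measurable \<alpha>0 \<Omega>" unfolding measurable_cong_sets[OF s\<alpha>(2) refl] by (rule mg0)
  have sM: "sets M = sets \<Omega>" "space M = UNIV"
    by (simp_all add: M_def m1_def \<Omega>_def space_pair_measure)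
  define RM where "RM E = measure \<nu> (Lt \<inter> f1 -` E) + measure \<nu> (Gt \<inter> f0 -` E)
      + (c (g1 -` E) - a (g1 -` E)) + (d (g0 -` E) - b (g0 -` E))" for E
  have EM: "emeasure M E = ennreal (RM E)" if E: "E \<in> sets \<Omega>" for E
  proof -
    have g1E: "g1 -` E \<in> sets borel" using measurable_sets[OF mg1 E] by simp
    have g0E: "g0 -` E \<in> sets borel" using measurable_sets[OF mg0 E] by simp
    have "emeasure M E = emeasure m1 E + emeasure m0 E + (emeasure t1 E + emeasure t0 E)"
      unfolding M_def by (simp add: emeasure_addm m1_def m0_def t1_def t0_def)
    also have "emeasure m1 E = emeasure \<nu> (Lt \<inter> f1 -` E)"
      unfolding m1_def by (rule emeasure_distr_restrict[OF Lts mf1 E])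
    also have "emeasure m0 E = emeasure \<nu> (Gt \<inter> f0 -` E)"
      unfolding m0_def by (rule emeasure_distr_restrict[OF Gts mf0 E])
    also have "emeasure t1 E = emeasure \<alpha>1 (g1 -` E)"
      unfolding t1_def using emeasure_distr[OF mg1' E] s\<alpha> by simp
    also have "emeasure t0 E = emeasure \<alpha>0 (g0 -` E)"
      unfolding t0_def using emeasure_distr[OF mg0' E] s\<alpha> by simp
    finally show ?thesis
      using e\<alpha>1[OF g1E] e\<alpha>0[OF g0E] ac(1)[OF g1E] ac(2)[OF g0E]
      unfolding RM_def n.emeasure_eq_measure
      by (simp add: ennreal_plus[symmetric] add.assoc del: ennreal_plus)
  qed
  define Dt where "Dt \<omega> = snd (fst \<omega>)" for \<omega> :: "(real \<times> bool) \<times> (real \<times> real)"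
  define Y0 where "Y0 \<omega> = fst (snd \<omega>)" for \<omega> :: "(real \<times> bool) \<times> (real \<times> real)"
  define Y1 where "Y1 \<omega> = snd (snd \<omega>)" for \<omega> :: "(real \<times> bool) \<times> (real \<times> real)"
  define Yt where "Yt \<omega> = (if Dt \<omega> then Y1 \<omega> else Y0 \<omega>)" for \<omega>
  have spP: "space P = UNIV"
    using sets_eq_imp_space_eq[OF sP] by (simp add: space_pair_measure)
  have meq: "measurable M = measurable \<Omega>" by (intro ext measurable_cong_sets[OF sM(1) refl])
  have mDt: "Dt \<in> measurable M (count_space UNIV)"
    unfolding meq Dt_def \<Omega>_def by measurable
  have mY0: "Y0 \<in> borel_measurable M"
    unfolding meq Y0_def \<Omega>_def by measurable
  have mY1: "Y1 \<in> borel_measurable M"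
    unfolding meq Y1_def \<Omega>_def by measurable
  have mYt: "Yt \<in> borel_measurable M"
    unfolding Yt_def using mDt mY0 mY1 by measurable
  have mYD: "(\<lambda>\<omega>. (Yt \<omega>, Dt \<omega>)) \<in> measurable M (borel \<Otimes>\<^sub>M count_space UNIV)"
    using mYt mDt by (intro measurable_Pair)
  have mYY: "(\<lambda>\<omega>. (Y0 \<omega>, Y1 \<omega>)) \<in> measurable M borel"
    using mY0 mY1 by (intro borel_measurable_Pair)
  have sets_to_Omega: "E \<in> sets M \<Longrightarrow> E \<in> sets \<Omega>" for E using sM by simp
  have UNIVO: "UNIV \<in> sets \<Omega>" using sets.top[of \<Omega>] by (simp add: \<Omega>_def space_pair_measure)
  have "emeasure M (space M) = ennreal (RM UNIV)"
    using EM[OF UNIVO] sM by simp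
  also have "RM UNIV = c UNIV + d UNIV"
  proof -
    have "S1 UNIV = Lt" "S0 UNIV = Gt" by (auto simp: S1_def S0_def Lt_def Gt_def)
    then show ?thesis unfolding RM_def a_def b_def by simp
  qed
  also have "c UNIV + d UNIV = measure P (space P)"
  proof -
    have "c UNIV + d UNIV = measure P (UNIV \<times> {True} \<union> UNIV \<times> {False})"
      unfolding c_def d_def using UT by (intro P.finite_measure_Union[symmetric]) auto
    also have "UNIV \<times> {True} \<union> UNIV \<times> {False} = space P" using spP by auto
    finally show ?thesis .
  qed
  finally have pM: "prob_space M" by (intro prob_spaceI) (simp add: P.prob_space)
  have lawYD: "distr M (borel \<Otimes>\<^sub>M count_space UNIV) (\<lambda>\<omega>. (Yt \<omega>, Dt \<omega>)) = P"
  proof (rule measure_eqI)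
    show "sets (distr M (borel \<Otimes>\<^sub>M count_space UNIV) (\<lambda>\<omega>. (Yt \<omega>, Dt \<omega>))) = sets P"
      using sP by simp
    fix G assume "G \<in> sets (distr M (borel \<Otimes>\<^sub>M count_space UNIV) (\<lambda>\<omega>. (Yt \<omega>, Dt \<omega>)))"
    then have G: "G \<in> sets (borel \<Otimes>\<^sub>M count_space UNIV)" by simp
    define GT where "GT = (\<lambda>y. (y, True)) -` G"
    define GF where "GF = (\<lambda>y. (y, False)) -` G"
    have GTb: "GT \<in> sets borel" unfolding GT_def by (rule sets_Pair2[OF G])
    have GFb: "GF \<in> sets borel" unfolding GF_def by (rule sets_Pair2[OF G])
    have pre: "(\<lambda>\<omega>. (Yt \<omega>, Dt \<omega>)) -` G \<inter> space M \<in> sets \<Omega>"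
      using measurable_sets[OF mYD G] sM by simp
    have "emeasure (distr M (borel \<Otimes>\<^sub>M count_space UNIV) (\<lambda>\<omega>. (Yt \<omega>, Dt \<omega>))) G
        = emeasure M ((\<lambda>\<omega>. (Yt \<omega>, Dt \<omega>)) -` G \<inter> space M)"
      by (rule emeasure_distr[OF mYD G])
    also have "\<dots> = ennreal (RM ((\<lambda>\<omega>. (Yt \<omega>, Dt \<omega>)) -` G \<inter> space M))" by (rule EM[OF pre])
    also have "RM ((\<lambda>\<omega>. (Yt \<omega>, Dt \<omega>)) -` G \<inter> space M) = c GT + d GF"
    proof -
      have 1: "Lt \<inter> f1 -` ((\<lambda>\<omega>. (Yt \<omega>, Dt \<omega>)) -` G \<inter> space M) = S1 GT"
        by (auto simp: Lt_def f1_def Yt_def Dt_def Y1_def Y0_def S1_def GT_def sM)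
      have 2: "Gt \<inter> f0 -` ((\<lambda>\<omega>. (Yt \<omega>, Dt \<omega>)) -` G \<inter> space M) = S0 GF"
        by (auto simp: Gt_def f0_def Yt_def Dt_def Y1_def Y0_def S0_def GF_def sM)
      have 3: "g1 -` ((\<lambda>\<omega>. (Yt \<omega>, Dt \<omega>)) -` G \<inter> space M) = GT"
        by (auto simp: g1_def Yt_def Dt_def Y1_def Y0_def GT_def sM)
      have 4: "g0 -` ((\<lambda>\<omega>. (Yt \<omega>, Dt \<omega>)) -` G \<inter> space M) = GF"
        by (auto simp: g0_def Yt_def Dt_def Y1_def Y0_def GF_def sM)
      show ?thesis unfolding RM_def 1 2 3 4 a_def[symmetric] b_def[symmetric] by simp
    qed
    also have "c GT + d GF = measure P G"
    proof -
      have "c GT + d GF = measure P (GT \<times> {True} \<union> GF \<times> {False})"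
        unfolding c_def d_def using inP[OF GTb] inP[OF GFb] by (intro P.finite_measure_Union[symmetric]) auto
      also have "GT \<times> {True} \<union> GF \<times> {False} = G"
      proof (rule set_eqI)
        fix p :: "real \<times> bool"
        obtain y e where p: "p = (y, e)" by (cases p)
        show "p \<in> GT \<times> {True} \<union> GF \<times> {False} \<longleftrightarrow> p \<in> G"
          unfolding p by (cases e) (auto simp: GT_def GF_def)
      qed
      finally show ?thesis .
    qed
    finally show "emeasure (distr M (borel \<Otimes>\<^sub>M count_space UNIV) (\<lambda>\<omega>. (Yt \<omega>, Dt \<omega>))) G = emeasure P G"
      by (simp add: P.emeasure_eq_measure)
  qed
  have lawYY: "distr M borel (\<lambda>\<omega>. (Y0 \<omega>, Y1 \<omega>)) = \<nu>"
  proof (rule measure_eqI)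
    show "sets (distr M borel (\<lambda>\<omega>. (Y0 \<omega>, Y1 \<omega>))) = sets \<nu>" using sn by simp
    fix A assume "A \<in> sets (distr M borel (\<lambda>\<omega>. (Y0 \<omega>, Y1 \<omega>)))"
    then have A: "A \<in> sets (borel :: (real \<times> real) measure)" by simp
    define DA where "DA = (\<lambda>y::real. (y, y)) -` A"
    have DAb: "DA \<in> sets borel" unfolding DA_def using measurable_sets[OF mid A] by simp
    have pre: "(\<lambda>\<omega>. (Y0 \<omega>, Y1 \<omega>)) -` A \<inter> space M \<in> sets \<Omega>"
      using measurable_sets[OF mYY A] sM by simp
    have Ab: "A \<in> sets \<nu>" using A sn by simp
    have "emeasure (distr M borel (\<lambda>\<omega>. (Y0 \<omega>, Y1 \<omega>))) A
        = emeasure M ((\<lambda>\<omega>. (Y0 \<omega>, Y1 \<omega>)) -` A \<inter> space M)"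
      by (rule emeasure_distr[OF mYY A])
    also have "\<dots> = ennreal (RM ((\<lambda>\<omega>. (Y0 \<omega>, Y1 \<omega>)) -` A \<inter> space M))" by (rule EM[OF pre])
    also have "RM ((\<lambda>\<omega>. (Y0 \<omega>, Y1 \<omega>)) -` A \<inter> space M) = measure \<nu> A"
    proof -
      have 1: "Lt \<inter> f1 -` ((\<lambda>\<omega>. (Y0 \<omega>, Y1 \<omega>)) -` A \<inter> space M) = Lt \<inter> A"
        by (auto simp: f1_def Y1_def Y0_def sM)
      have 2: "Gt \<inter> f0 -` ((\<lambda>\<omega>. (Y0 \<omega>, Y1 \<omega>)) -` A \<inter> space M) = Gt \<inter> A"
        by (auto simp: f0_def Y1_def Y0_def sM)
      have 3: "g1 -` ((\<lambda>\<omega>. (Y0 \<omega>, Y1 \<omega>)) -` A \<inter> space M) = DA"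
        by (auto simp: g1_def Y1_def Y0_def DA_def sM)
      have 4: "g0 -` ((\<lambda>\<omega>. (Y0 \<omega>, Y1 \<omega>)) -` A \<inter> space M) = DA"
        by (auto simp: g0_def Y1_def Y0_def DA_def sM)
      have u1: "measure \<nu> (S1 DA \<union> S0 DA \<union> Dg DA) = a DA + b DA + measure \<nu> (Dg DA)"
      proof -
        have "measure \<nu> (S1 DA \<union> S0 DA \<union> Dg DA) = measure \<nu> (S1 DA \<union> S0 DA) + measure \<nu> (Dg DA)"
          using bS1[OF DAb] by (intro n.finite_measure_Union) (auto simp: S1_def S0_def Dg_def)
        also have "measure \<nu> (S1 DA \<union> S0 DA) = a DA + b DA"
          unfolding a_def b_def using bS1[OF DAb] by (intro n.finite_measure_Union) (auto simp: S1_def S0_def)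
        finally show ?thesis .
      qed
      have EqA: "Dg DA = A \<inter> {p. fst p = snd p}"
        by (auto simp: Dg_def DA_def)
      have Eqs: "{p :: real \<times> real. fst p = snd p} \<in> sets \<nu>"
        unfolding sn by (intro borel_closed closed_Collect_eq continuous_intros)
      have part: "measure \<nu> A = measure \<nu> (Lt \<inter> A) + measure \<nu> (Gt \<inter> A) + measure \<nu> (A \<inter> {p. fst p = snd p})"
      proof -
        have "A = ((Lt \<inter> A) \<union> (Gt \<inter> A)) \<union> (A \<inter> {p. fst p = snd p})"
          by (auto simp: Lt_def Gt_def)
        then have "measure \<nu> A = measure \<nu> (((Lt \<inter> A) \<union> (Gt \<inter> A)) \<union> (A \<inter> {p. fst p = snd p}))"
          by simp
        also have "\<dots> = measure \<nu> ((Lt \<inter> A) \<union> (Gt \<inter> A)) + measure \<nu> (A \<inter> {p. fst p = snd p})"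
          using Lts Gts Ab Eqs by (intro n.finite_measure_Union) (auto simp: Lt_def Gt_def)
        also have "measure \<nu> ((Lt \<inter> A) \<union> (Gt \<inter> A)) = measure \<nu> (Lt \<inter> A) + measure \<nu> (Gt \<inter> A)"
          using Lts Gts Ab by (intro n.finite_measure_Union) (auto simp: Lt_def Gt_def)
        finally show ?thesis .
      qed
      show ?thesis unfolding RM_def 1 2 3 4 using ac(3)[OF DAb] u1 EqA part by simp
    qed
    finally show "emeasure (distr M borel (\<lambda>\<omega>. (Y0 \<omega>, Y1 \<omega>))) A = emeasure \<nu> A"
      by (simp add: n.emeasure_eq_measure)
  qed
  define Bad where "Bad = {\<omega>. (Y0 \<omega> < Y1 \<omega> \<and> \<not> Dt \<omega>) \<or> (Y1 \<omega> < Y0 \<omega> \<and> Dt \<omega>)}"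
  have Bads: "Bad \<in> sets M"
  proof -
    have "Bad = {\<omega> \<in> space M. (Y0 \<omega> < Y1 \<omega> \<and> \<not> Dt \<omega>) \<or> (Y1 \<omega> < Y0 \<omega> \<and> Dt \<omega>)}"
      by (simp add: Bad_def sM)
    also have "\<dots> \<in> sets M" using mY0 mY1 mDt by measurable
    finally show ?thesis .
  qed
  have "emeasure M Bad = ennreal (RM Bad)" using EM[OF sets_to_Omega[OF Bads]] .
  also have "RM Bad = 0"
  proof -
    have "Lt \<inter> f1 -` Bad = {}" "Gt \<inter> f0 -` Bad = {}" "g1 -` Bad = {}" "g0 -` Bad = {}"
      by (auto simp: Bad_def Lt_def Gt_def f1_def f0_def g1_def g0_def Y0_def Y1_def Dt_def)
    moreover have "S1 {} = {}" "S0 {} = {}" by (auto simp: S1_def S0_def)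
    ultimately show ?thesis unfolding RM_def a_def b_def c_def d_def by simp
  qed
  finally have "Bad \<in> null_sets M" using Bads by (intro null_setsI) simp_all
  then have AEs: "AE \<omega> in M. (Y1 \<omega> > Y0 \<omega> \<longrightarrow> Dt \<omega>) \<and> (Y1 \<omega> < Y0 \<omega> \<longrightarrow> \<not> Dt \<omega>)"
    by (rule AE_I') (auto simp: Bad_def)
  have "roy_realization M Yt Dt Y0 Y1 P \<nu>"
    unfolding roy_realization_def
    using pM mYt mDt mY0 mY1 lawYD lawYY AEs by (simp add: Yt_def)
  then show ?thesis by blast
qed


theorem theorem3:
  fixes P :: "(real \<times> bool) measure" and \<nu> :: "(real \<times> real) measure"
  assumes "prob_space P" and "sets P = sets (borel \<Otimes>\<^sub>M count_space UNIV)"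
    and "prob_space \<nu>" and "sets \<nu> = sets borel"
  shows "(sharp_bounds P \<nu> \<longrightarrow>
           (\<exists>(M :: ((real \<times> bool) \<times> (real \<times> real)) measure) Yt Dt Y0 Y1.
               roy_realization M Yt Dt Y0 Y1 P \<nu>))
       \<and> (\<forall>(M :: 'c measure) Yt Dt Y0 Y1.
               roy_realization M Yt Dt Y0 Y1 P \<nu> \<longrightarrow> sharp_bounds P \<nu>)"
proof (intro conjI impI allI)
  assume "sharp_bounds P \<nu>"
  then show "\<exists>(M :: ((real \<times> bool) \<times> (real \<times> real)) measure) Yt Dt Y0 Y1.
               roy_realization M Yt Dt Y0 Y1 P \<nu>"
    by (rule sufficient[OF assms])
next
  fix M :: "'c measure" and Yt Dt Y0 Y1
  assume R: "roy_realization M Yt Dt Y0 Y1 P \<nu>"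
  interpret prob_space P by (rule assms(1))
  show "sharp_bounds P \<nu>"
    by (rule necessary[OF finite_measure_axioms assms(2) R])
qed

end
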